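(* Let $X$ be a $d$-uniform simplicial complex, $k\le d$, and $f:X(k)\to[0,1]$ satisfy, for all $t>0$, $\Pr_{X(k)}[f-\mathbb{E}[f]>t]\le up(t)$ and $\Pr_{X(k)}[f-\mathbb{E}[f]<-t]\le low(t)$ for some functions $up,low:\mathbb{R}_+\to[0,1]$. Then the $d$-lift $U_{k,d}f:X(d)\to\mathbb{R}$ satisfies, for all $t>0$, \[\Pr_{X(d)}[U_{k,d}f-\mathbb{E}[f]>t]\le up(\tfrac t2)\left(1-\pi_{low}^{d,k,f}(\tfrac t2)\right)^{-1},\qquad \Pr_{X(d)}[U_{k,d}f-\mathbb{E}[f]<-t]\le low(\tfrac t2)\left(1-\pi_{up}^{d,k,f}(\tfrac t2)\right)^{-1}.\]
   Context: $X$ is a $d$-uniform simplicial complex (downward-closed set family with maximal sets of size $d$, $X(j)$ its faces of size $j$) with a distribution $\pi_d$ on $X(d)$, inducing $\pi_j$ on $X(j)$ by uniform subsampling; probabilities over $X(j)$ are with respect to $\pi_j$. The lift is $U_{k,d}f(s)=\mathbb{E}_{r\subseteq s}[f(r)]$ over uniformly random $k$-subsets $r$ of $s\in X(d)$. Define $\pi_{up}^{d,k,f}(t)=\max_{s\in X(d)}\Pr_{r\subseteq s}[f(r)-\mathbb{E}_{r\subseteq s}[f]>t]$ and $\pi_{low}^{d,k,f}(t)=\max_{s\in X(d)}\Pr_{r\subseteq s}[f(r)-\mathbb{E}_{r\subseteq s}[f]<-t]$, with $r$ a uniformly random $k$-subset of $s$. *)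

theory Defs
  imports Complex_Main
begin

text \<open>A d-uniform simplicial complex is given by its top faces Xd (finite sets of
  size d); the complex is their downward closure. p is the distribution pi_d on Xd.\<close>

definition simplicial_dist :: "'a set set \<Rightarrow> nat \<Rightarrow> ('a set \<Rightarrow> real) \<Rightarrow> bool" where
  "simplicial_dist Xd d p \<longleftrightarrow> finite Xd \<and> (\<forall>s\<in>Xd. finite s \<and> card s = d)
     \<and> (\<forall>s\<in>Xd. 0 \<le> p s) \<and> (\<Sum>s\<in>Xd. p s) = 1"

definition faces :: "'a set set \<Rightarrow> nat \<Rightarrow> 'a set set" where
  "faces Xd j = {r. \<exists>s\<in>Xd. r \<subseteq> s \<and> card r = j}"

text \<open>pi_j induced by uniform subsampling: draw s from pi_d, then a uniform j-subset of s.\<close>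
definition pi_j :: "'a set set \<Rightarrow> nat \<Rightarrow> ('a set \<Rightarrow> real) \<Rightarrow> nat \<Rightarrow> 'a set \<Rightarrow> real" where
  "pi_j Xd d p j r = (\<Sum>s\<in>{s\<in>Xd. r \<subseteq> s}. p s) / real (d choose j)"

definition prob_faces :: "'a set set \<Rightarrow> nat \<Rightarrow> ('a set \<Rightarrow> real) \<Rightarrow> nat \<Rightarrow> ('a set \<Rightarrow> bool) \<Rightarrow> real" where
  "prob_faces Xd d p j P = (\<Sum>r\<in>{r\<in>faces Xd j. P r}. pi_j Xd d p j r)"

definition expect_faces :: "'a set set \<Rightarrow> nat \<Rightarrow> ('a set \<Rightarrow> real) \<Rightarrow> nat \<Rightarrow> ('a set \<Rightarrow> real) \<Rightarrow> real" where
  "expect_faces Xd d p j f = (\<Sum>r\<in>faces Xd j. pi_j Xd d p j r * f r)"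

definition lift :: "nat \<Rightarrow> nat \<Rightarrow> ('a set \<Rightarrow> real) \<Rightarrow> 'a set \<Rightarrow> real" where
  "lift k d f s = (\<Sum>r\<in>{r. r \<subseteq> s \<and> card r = k}. f r) / real (d choose k)"

definition local_prob :: "nat \<Rightarrow> nat \<Rightarrow> 'a set \<Rightarrow> ('a set \<Rightarrow> bool) \<Rightarrow> real" where
  "local_prob k d s P = real (card {r. r \<subseteq> s \<and> card r = k \<and> P r}) / real (d choose k)"

definition pi_up :: "'a set set \<Rightarrow> nat \<Rightarrow> nat \<Rightarrow> ('a set \<Rightarrow> real) \<Rightarrow> real \<Rightarrow> real" where
  "pi_up Xd d k f t = Max ((\<lambda>s. local_prob k d s (\<lambda>r. f r - lift k d f s > t)) ` Xd)"

definition pi_low :: "'a set set \<Rightarrow> nat \<Rightarrow> nat \<Rightarrow> ('a set \<Rightarrow> real) \<Rightarrow> real \<Rightarrow> real" where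
  "pi_low Xd d k f t = Max ((\<lambda>s. local_prob k d s (\<lambda>r. f r - lift k d f s < - t)) ` Xd)"

end

theory Submission
  imports Defs
begin

lemma faces_finite:
  assumes "simplicial_dist Xd d p"
  shows "finite (faces Xd j)"
proof -
  have "faces Xd j \<subseteq> (\<Union>s\<in>Xd. Pow s)" unfolding faces_def by auto
  moreover have "finite (\<Union>s\<in>Xd. Pow s)" using assms unfolding simplicial_dist_def by auto
  ultimately show ?thesis by (rule finite_subset)
qed

lemma double_count:
  assumes cx: "simplicial_dist Xd d p"
  shows "prob_faces Xd d p k P = (\<Sum>s\<in>Xd. p s * local_prob k d s P)"
proof -
  define F where "F = {r\<in>faces Xd k. P r}"
  have fF: "finite F" using faces_finite[OF cx] unfolding F_def by auto
  have fX: "finite Xd" using cx unfolding simplicial_dist_def by auto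
  have "prob_faces Xd d p k P = (\<Sum>r\<in>F. (\<Sum>s\<in>Xd. if r \<subseteq> s then p s else 0) / real (d choose k))"
    unfolding prob_faces_def pi_j_def F_def
    by (rule sum.cong) (auto simp: sum.inter_filter[OF fX])
  also have "\<dots> = (\<Sum>r\<in>F. \<Sum>s\<in>Xd. (if r \<subseteq> s then p s else 0)) / real (d choose k)"
    by (simp add: sum_divide_distrib)
  also have "\<dots> = (\<Sum>s\<in>Xd. \<Sum>r\<in>F. (if r \<subseteq> s then p s else 0)) / real (d choose k)"
    by (subst sum.swap) simp
  also have "\<dots> = (\<Sum>s\<in>Xd. p s * real (card {r. r \<subseteq> s \<and> card r = k \<and> P r})) / real (d choose k)"
  proof -
    have "(\<Sum>r\<in>F. (if r \<subseteq> s then p s else 0)) = p s * real (card {r. r \<subseteq> s \<and> card r = k \<and> P r})"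
      if "s \<in> Xd" for s
    proof -
      have eq: "{r\<in>F. r \<subseteq> s} = {r. r \<subseteq> s \<and> card r = k \<and> P r}"
        using that unfolding F_def faces_def by auto
      have "(\<Sum>r\<in>F. (if r \<subseteq> s then p s else 0)) = (\<Sum>r\<in>{r\<in>F. r \<subseteq> s}. p s)"
        by (rule sum.inter_filter[OF fF, symmetric])
      also have "\<dots> = p s * real (card {r. r \<subseteq> s \<and> card r = k \<and> P r})"
        by (simp add: eq)
      finally show ?thesis .
    qed
    then show ?thesis by (simp cong: sum.cong)
  qed
  also have "\<dots> = (\<Sum>s\<in>Xd. p s * local_prob k d s P)"
    unfolding local_prob_def by (simp add: sum_divide_distrib)
  finally show ?thesis .
qed

lemma faces_top:
  assumes cx: "simplicial_dist Xd d p"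
  shows "faces Xd d = Xd"
proof
  show "faces Xd d \<subseteq> Xd"
  proof
    fix r assume "r \<in> faces Xd d"
    then obtain s where s: "s \<in> Xd" "r \<subseteq> s" "card r = d" unfolding faces_def by auto
    have "finite s" "card s = d" using cx s(1) unfolding simplicial_dist_def by auto
    then have "r = s" using s by (metis card_subset_eq)
    then show "r \<in> Xd" using s by simp
  qed
next
  show "Xd \<subseteq> faces Xd d" using cx unfolding faces_def simplicial_dist_def by auto
qed

lemma prob_top:
  assumes cx: "simplicial_dist Xd d p"
  shows "prob_faces Xd d p d Q = (\<Sum>s\<in>{s\<in>Xd. Q s}. p s)"
proof -
  have "pi_j Xd d p d s = p s" if "s \<in> Xd" for s
  proof -
    have "{s'\<in>Xd. s \<subseteq> s'} = {s}"
    proof -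
      have "s' = s" if "s' \<in> Xd" "s \<subseteq> s'" for s'
        using cx that \<open>s \<in> Xd\<close> unfolding simplicial_dist_def
        by (metis card_subset_eq)
      then show ?thesis using that by auto
    qed
    then show ?thesis unfolding pi_j_def by simp
  qed
  then show ?thesis unfolding prob_faces_def faces_top[OF cx] by simp
qed

lemma local_prob_compl:
  assumes fs: "finite s" and cs: "card s = d" and kd: "k \<le> d"
    and imp: "\<And>r. \<not> P r \<Longrightarrow> P' r"
  shows "1 - local_prob k d s P' \<le> local_prob k d s P"
proof -
  let ?A = "{r. r \<subseteq> s \<and> card r = k}"
  have fA: "finite ?A" using fs by auto
  have cA: "card ?A = d choose k" using n_subsets[OF fs] cs by simp
  have "?A \<subseteq> {r. r \<subseteq> s \<and> card r = k \<and> P r} \<union> {r. r \<subseteq> s \<and> card r = k \<and> P' r}"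
    using imp by auto
  then have "card ?A \<le> card ({r. r \<subseteq> s \<and> card r = k \<and> P r} \<union> {r. r \<subseteq> s \<and> card r = k \<and> P' r})"
    by (rule card_mono[rotated]) (auto intro: rev_finite_subset[OF fA])
  also have "\<dots> \<le> card {r. r \<subseteq> s \<and> card r = k \<and> P r} + card {r. r \<subseteq> s \<and> card r = k \<and> P' r}"
    by (rule card_Un_le)
  finally have "real (d choose k) \<le> real (card {r. r \<subseteq> s \<and> card r = k \<and> P r}) + real (card {r. r \<subseteq> s \<and> card r = k \<and> P' r})"
    using cA by linarith
  moreover have "real (d choose k) > 0" using kd by simp
  ultimately have "1 \<le> real (card {r. r \<subseteq> s \<and> card r = k \<and> P r}) / real (d choose k)
      + real (card {r. r \<subseteq> s \<and> card r = k \<and> P' r}) / real (d choose k)"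
    by (simp add: add_divide_distrib[symmetric])
  then show ?thesis unfolding local_prob_def by linarith
qed

lemma generic_bound:
  assumes cx: "simplicial_dist Xd d p"
    and c1: "c < 1"
    and loc: "\<And>s. s \<in> Xd \<Longrightarrow> Q s \<Longrightarrow> 1 - c \<le> local_prob k d s P"
    and tail: "prob_faces Xd d p k P \<le> u"
  shows "prob_faces Xd d p d Q \<le> u / (1 - c)"
proof -
  have fX: "finite Xd" and p0: "\<And>s. s \<in> Xd \<Longrightarrow> 0 \<le> p s"
    using cx unfolding simplicial_dist_def by auto
  have lp0: "0 \<le> local_prob k d s P" for s unfolding local_prob_def by simp
  have "prob_faces Xd d p d Q * (1 - c) = (\<Sum>s\<in>{s\<in>Xd. Q s}. p s * (1 - c))"
    unfolding prob_top[OF cx] by (simp add: sum_distrib_right)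
  also have "\<dots> \<le> (\<Sum>s\<in>{s\<in>Xd. Q s}. p s * local_prob k d s P)"
    by (rule sum_mono) (use loc p0 in \<open>auto intro: mult_left_mono\<close>)
  also have "\<dots> \<le> (\<Sum>s\<in>Xd. p s * local_prob k d s P)"
    by (rule sum_mono2) (use fX p0 lp0 in auto)
  also have "\<dots> = prob_faces Xd d p k P" by (simp add: double_count[OF cx])
  also have "\<dots> \<le> u" by (rule tail)
  finally show ?thesis using c1 by (simp add: field_simps)
qed

theorem mainTheorem10:
  fixes Xd :: "'a set set" and d k :: nat and p f :: "'a set \<Rightarrow> real"
    and up low :: "real \<Rightarrow> real"
  assumes cx: "simplicial_dist Xd d p"
    and kd: "k \<le> d"
    and f01: "\<forall>r\<in>faces Xd k. 0 \<le> f r \<and> f r \<le> 1"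
    and up01: "\<forall>t>0. 0 \<le> up t \<and> up t \<le> 1"
    and low01: "\<forall>t>0. 0 \<le> low t \<and> low t \<le> 1"
    and up_tail: "\<forall>t>0. prob_faces Xd d p k
                    (\<lambda>r. f r - expect_faces Xd d p k f > t) \<le> up t"
    and low_tail: "\<forall>t>0. prob_faces Xd d p k
                    (\<lambda>r. f r - expect_faces Xd d p k f < - t) \<le> low t"
  shows "\<forall>t>0.
     (pi_low Xd d k f (t/2) < 1 \<longrightarrow>
        prob_faces Xd d p d (\<lambda>s. lift k d f s - expect_faces Xd d p k f > t)
          \<le> up (t/2) / (1 - pi_low Xd d k f (t/2)))
   \<and> (pi_up Xd d k f (t/2) < 1 \<longrightarrow>
        prob_faces Xd d p d (\<lambda>s. lift k d f s - expect_faces Xd d p k f < - t)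
          \<le> low (t/2) / (1 - pi_up Xd d k f (t/2)))"
proof (intro allI impI conjI)
  fix t :: real assume t: "t > 0"
  let ?m = "expect_faces Xd d p k f"
  have fX: "finite Xd" and sd: "\<And>s. s \<in> Xd \<Longrightarrow> finite s \<and> card s = d"
    using cx unfolding simplicial_dist_def by auto
  {
    assume c1: "pi_low Xd d k f (t/2) < 1"
    show "prob_faces Xd d p d (\<lambda>s. lift k d f s - ?m > t) \<le> up (t/2) / (1 - pi_low Xd d k f (t/2))"
    proof (rule generic_bound[OF cx c1])
      show "prob_faces Xd d p k (\<lambda>r. f r - ?m > t/2) \<le> up (t/2)" using up_tail half_gt_zero[OF t] by blast
    next
      fix s assume s: "s \<in> Xd" and Q: "lift k d f s - ?m > t"
      have "1 - local_prob k d s (\<lambda>r. f r - lift k d f s < - (t/2)) \<le> local_prob k d s (\<lambda>r. f r - ?m > t/2)"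
        by (rule local_prob_compl) (use sd[OF s] kd Q in auto)
      moreover have "local_prob k d s (\<lambda>r. f r - lift k d f s < - (t/2)) \<le> pi_low Xd d k f (t/2)"
        unfolding pi_low_def by (rule Max_ge) (use fX s in auto)
      ultimately show "1 - pi_low Xd d k f (t/2) \<le> local_prob k d s (\<lambda>r. f r - ?m > t/2)" by linarith
    qed
  }
  {
    assume c1: "pi_up Xd d k f (t/2) < 1"
    show "prob_faces Xd d p d (\<lambda>s. lift k d f s - ?m < - t) \<le> low (t/2) / (1 - pi_up Xd d k f (t/2))"
    proof (rule generic_bound[OF cx c1])
      show "prob_faces Xd d p k (\<lambda>r. f r - ?m < - (t/2)) \<le> low (t/2)" using low_tail half_gt_zero[OF t] by blast
    next
      fix s assume s: "s \<in> Xd" and Q: "lift k d f s - ?m < - t"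
      have "1 - local_prob k d s (\<lambda>r. f r - lift k d f s > t/2) \<le> local_prob k d s (\<lambda>r. f r - ?m < - (t/2))"
        by (rule local_prob_compl) (use sd[OF s] kd Q in auto)
      moreover have "local_prob k d s (\<lambda>r. f r - lift k d f s > t/2) \<le> pi_up Xd d k f (t/2)"
        unfolding pi_up_def by (rule Max_ge) (use fX s in auto)
      ultimately show "1 - pi_up Xd d k f (t/2) \<le> local_prob k d s (\<lambda>r. f r - ?m < - (t/2))" by linarith
    qed
  }
qed

end
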